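(* Let $f:[0,\infty)\to\mathbb{R}$ be four times differentiable with $f(0)\ge0$, $f'(0)\ge0$, and $f^{(4)}(u)>0$ for all $u>0$. Then the function $u\mapsto f(u)/u^2$ is strictly convex on $(0,\infty)$. *)

theory Defs
  imports "HOL-Analysis.Analysis"
begin

definition strict_convex_on :: "real set \<Rightarrow> (real \<Rightarrow> real) \<Rightarrow> bool" where
  "strict_convex_on S f \<longleftrightarrow> convex S \<and>
     (\<forall>x\<in>S. \<forall>y\<in>S. \<forall>t::real. x \<noteq> y \<and> 0 < t \<and> t < 1 \<longrightarrow>
        f ((1 - t) * x + t * y) < (1 - t) * f x + t * f y)"

end

theory Submission
  imports Defs
begin

lemma pos_from_deriv:
  fixes F F' :: "real \<Rightarrow> real"
  assumes d: "\<And>x. x \<ge> 0 \<Longrightarrow> (F has_real_derivative F' x) (at x within {0..})"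
    and F0: "F 0 \<ge> 0" and pos: "\<And>x. x > 0 \<Longrightarrow> F' x > 0" and u: "u > 0"
  shows "F u > 0"
proof -
  have c: "continuous_on {0..} F"
    by (rule DERIV_continuous_on) (use d in auto)
  have c2: "continuous_on {0..u} F"
    by (rule continuous_on_subset[OF c]) auto
  have dat: "\<And>x. x > 0 \<Longrightarrow> (F has_real_derivative F' x) (at x)"
  proof -
    fix x :: real assume "x > 0"
    then have "at x within {0..} = at x" by (intro at_within_interior) auto
    with d[of x] \<open>x > 0\<close> show "(F has_real_derivative F' x) (at x)" by simp
  qed
  obtain l z where z: "0 < z" "z < u" "DERIV F z :> l" "F u - F 0 = (u - 0) * l"
    using MVT[OF u c2] dat by (meson real_differentiable_def)
  have "l = F' z" using DERIV_unique[OF z(3) dat[OF z(1)]] .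
  have "u * F' z > 0" using u pos[OF z(1)] by simp
  with z \<open>l = F' z\<close> F0 show ?thesis by simp
qed

lemma sc_from_deriv:
  fixes g g' :: "real \<Rightarrow> real"
  assumes d: "\<And>x. x > 0 \<Longrightarrow> (g has_real_derivative g' x) (at x)"
    and inc: "\<And>a b. 0 < a \<Longrightarrow> a < b \<Longrightarrow> g' a < g' b"
  shows "strict_convex_on {0<..} g"
proof -
  have aux: "g ((1 - t) * x + t * y) < (1 - t) * g x + t * g y"
    if xy: "0 < x" "x < y" and t: "0 < t" "t < 1" for x y t
  proof -
    define z where "z = (1 - t) * x + t * y"
    have zx: "z - x = t * (y - x)" by (simp add: z_def algebra_simps)
    have yz: "y - z = (1 - t) * (y - x)" by (simp add: z_def algebra_simps)
    have "z - x > 0" using zx xy t by simp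
    have "y - z > 0" using yz xy t by simp
    obtain a where a: "x < a" "a < z" "g z - g x = (z - x) * g' a"
      using MVT2[of x z g g', OF _ d] \<open>z - x > 0\<close> xy by auto
    obtain b where b: "z < b" "b < y" "g y - g z = (y - z) * g' b"
      using MVT2[of z y g g', OF _ d] \<open>y - z > 0\<close> \<open>z - x > 0\<close> xy by auto
    have ab: "g' a < g' b" using inc a b xy by simp
    have "(1 - t) * g x + t * g y - g z = t * (1 - t) * (y - x) * (g' b - g' a)"
    proof -
      have "(1 - t) * g x + t * g y - g z = (1 - t) * (g x - g z) + t * (g y - g z)"
        by (simp add: algebra_simps)
      also have "\<dots> = (1 - t) * (- (t * (y - x) * g' a)) + t * ((1 - t) * (y - x) * g' b)"
        using a(3) b(3) zx yz by (metis minus_diff_eq mult.assoc)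
      also have "\<dots> = t * (1 - t) * (y - x) * (g' b - g' a)"
        by (simp add: algebra_simps)
      finally show ?thesis .
    qed
    moreover have "t * (1 - t) * (y - x) * (g' b - g' a) > 0"
      using t xy ab by simp
    ultimately show ?thesis unfolding z_def by linarith
  qed
  show ?thesis
    unfolding strict_convex_on_def
  proof (intro conjI ballI allI impI)
    show "convex {0::real<..}" by (rule convex_real_interval)
  next
    fix x y t :: real
    assume x: "x \<in> {0<..}" and y: "y \<in> {0<..}" and h: "x \<noteq> y \<and> 0 < t \<and> t < 1"
    show "g ((1 - t) * x + t * y) < (1 - t) * g x + t * g y"
    proof (cases "x < y")
      case True then show ?thesis using aux x y h by auto
    next
      case False
      then have "y < x" using h by auto
      from aux[OF _ this, of "1 - t"] y h
      have "g ((1 - (1 - t)) * y + (1 - t) * x) < (1 - (1 - t)) * g y + (1 - t) * g x" by auto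
      then show ?thesis by (simp add: algebra_simps)
    qed
  qed
qed

theorem lemma5:
  fixes f f1 f2 f3 f4 :: "real \<Rightarrow> real"
  assumes d1: "\<And>x. x \<ge> 0 \<Longrightarrow> (f has_real_derivative f1 x) (at x within {0..})"
    and d2: "\<And>x. x \<ge> 0 \<Longrightarrow> (f1 has_real_derivative f2 x) (at x within {0..})"
    and d3: "\<And>x. x \<ge> 0 \<Longrightarrow> (f2 has_real_derivative f3 x) (at x within {0..})"
    and d4: "\<And>x. x \<ge> 0 \<Longrightarrow> (f3 has_real_derivative f4 x) (at x within {0..})"
    and f0: "f 0 \<ge> 0"
    and f10: "f1 0 \<ge> 0"
    and f4pos: "\<And>u. u > 0 \<Longrightarrow> f4 u > 0"
  shows "strict_convex_on {0<..} (\<lambda>u. f u / u\<^sup>2)"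
proof -
  define H1 where "H1 u = u\<^sup>2 * f3 u - 2 * u * f2 u + 2 * f1 u" for u
  define H where "H u = u\<^sup>2 * f2 u - 4 * u * f1 u + 6 * f u" for u
  have dH1: "(H1 has_real_derivative u\<^sup>2 * f4 u) (at u within {0..})" if "u \<ge> 0" for u
    unfolding H1_def
    apply (rule derivative_eq_intros d1[OF that] d2[OF that] d3[OF that] d4[OF that] refl)+
    apply (simp add: algebra_simps power2_eq_square)
    done
  have H1pos: "H1 u > 0" if "u > 0" for u
    by (rule pos_from_deriv[OF dH1]) (use f10 f4pos that in \<open>auto simp: H1_def\<close>)
  have dH: "(H has_real_derivative H1 u) (at u within {0..})" if "u \<ge> 0" for u
    unfolding H_def
    apply (rule derivative_eq_intros d1[OF that] d2[OF that] d3[OF that] d4[OF that] refl)+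
    apply (simp add: H1_def algebra_simps power2_eq_square)
    done
  have Hpos: "H u > 0" if "u > 0" for u
    by (rule pos_from_deriv[OF dH]) (use f0 H1pos that in \<open>auto simp: H_def\<close>)
  have dat: "\<And>F F' x. x > 0 \<Longrightarrow> (F has_real_derivative F' x) (at x within {0..})
      \<Longrightarrow> (F has_real_derivative F' x) (at x)"
  proof -
    fix F F' :: "real \<Rightarrow> real" and x :: real
    assume "x > 0" "(F has_real_derivative F' x) (at x within {0..})"
    moreover from \<open>x > 0\<close> have "at x within {0..} = at x" by (intro at_within_interior) auto
    ultimately show "(F has_real_derivative F' x) (at x)" by simp
  qed
  define G1 where "G1 u = f1 u / u\<^sup>2 - 2 * f u / u ^ 3" for u
  have dg: "((\<lambda>u. f u / u\<^sup>2) has_real_derivative G1 x) (at x)" if "x > 0" for x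
  proof -
    have a: "(f has_real_derivative f1 x) (at x)" by (rule dat[where F'=f1, OF that d1[OF less_imp_le[OF that]]])
    
      have n2: "x^2 \<noteq> 0" and n3: "x^3 \<noteq> 0" using that by auto
      show ?thesis unfolding G1_def
      apply (rule derivative_eq_intros a refl n2 n3)+
      using that apply (simp add: field_simps power2_eq_square power3_eq_cube eval_nat_numeral)
      done
  qed
  have dG: "(G1 has_real_derivative H x / x ^ 4) (at x)" if "x > 0" for x
  proof -
    have a: "(f has_real_derivative f1 x) (at x)" by (rule dat[where F'=f1, OF that d1[OF less_imp_le[OF that]]])
    have b: "(f1 has_real_derivative f2 x) (at x)" by (rule dat[where F'=f2, OF that d2[OF less_imp_le[OF that]]])
    
      have n2: "x^2 \<noteq> 0" and n3: "x^3 \<noteq> 0" using that by auto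
      show ?thesis unfolding G1_def[abs_def] H_def
      apply (rule derivative_eq_intros a b refl n2 n3)+
      using that apply (simp add: field_simps power2_eq_square power3_eq_cube eval_nat_numeral)
      done
  qed
  have inc: "G1 a < G1 b" if ab: "0 < a" "a < b" for a b
  proof -
    obtain z where z: "a < z" "z < b" "G1 b - G1 a = (b - a) * (H z / z ^ 4)"
      using MVT2[of a b G1 "\<lambda>x. H x / x ^ 4", OF ab(2) dG] ab by auto
    have "H z / z ^ 4 > 0" using Hpos[of z] z ab by simp
    with z ab have "G1 b - G1 a > 0" by (metis diff_gt_0_iff_gt mult_pos_pos)
    then show ?thesis by simp
  qed
  show ?thesis by (rule sc_from_deriv[OF dg inc])
qed

end
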